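(* Fix a $d$-RSK growth diagram on a Young diagram $F$ and a lattice point $p$ of $F$ such that $\mathrm{Rect}_p$ contains no se-chain of length $d$. Then every cell of $\mathrm{Rect}_p$ satisfies the RSK local rule.
   Context: Partitions: finite weakly decreasing sequences of positive integers, $\lambda_i=0$ for $i>\ell(\lambda)$; $d$-partitions have $\ell\le d$; $\alpha\prec\beta$ (also $\beta\succ\alpha$) means $\beta_1\ge\alpha_1\ge\beta_2\ge\alpha_2\ge\cdots$. Young diagrams lie in the first quadrant with unit cells at integer lattice points, left-justified, rows stacked upward; lattice points are cell corners; a filling assigns nonnegative integers to cells. For a lattice point $p=(x,y)$, $\mathrm{Rect}_p$ is the rectangle $[0,x]\times[0,y]$ viewed as a Young diagram. A se-chain is a sequence of cells with nonzero entries, each strictly below and strictly to the right of the previous; its length is the number of cells. For a cell with entry $m$ and bottom-left, top-left, bottom-right, top-right corners $\kappa,\mu,\nu,\rho$: the RSK local rule requires $\mu\succ\kappa\prec\nu$, $\mu\prec\rho\succ\nu$, $\rho_1=m+\max(\mu_1,\nu_1)$, and $\rho_i+\kappa_{i-1}=\min(\mu_{i-1},\nu_{i-1})+\max(\mu_i,\nu_i)$ for all $i\ge2$. The $d$-RSK local rule requires all four to be $d$-partitions, $\mu\succ\kappa\prec\nu$, $\mu\prec\rho\succ\nu$, $m=0$ or $\kappa_d=0$, $\rho_1+\kappa_d=m+\min(\mu_d,\nu_d)+\max(\mu_1,\nu_1)$, and $\rho_i+\kappa_{i-1}=\min(\mu_{i-1},\nu_{i-1})+\max(\mu_i,\nu_i)$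 for $2\le i\le d$. A $d$-RSK growth diagram on $F$ is a filling plus a partition at each lattice point, with $\emptyset$ at all lattice points on the coordinate axes, every cell satisfying the $d$-RSK local rule. *)

theory Defs
  imports Main
begin

text \<open>Partitions are represented as functions lam :: nat => nat, with parts
  lam 1, lam 2, ... (index 0 unused and required to be 0), weakly decreasing
  and finitely supported.\<close>

type_synonym partition = "nat \<Rightarrow> nat"

definition is_partition :: "partition \<Rightarrow> bool" where
  "is_partition lam \<longleftrightarrow> lam 0 = 0 \<and> (\<forall>i\<ge>1. lam (Suc i) \<le> lam i) \<and> finite {i. lam i \<noteq> 0}"

definition empty_partition :: partition where
  "empty_partition = (\<lambda>_. 0)"

definition is_d_partition :: "nat \<Rightarrow> partition \<Rightarrow> bool" where
  "is_d_partition d lam \<longleftrightarrow> is_partition lam \<and> (\<forall>i>d. lam i = 0)"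

definition interlaces :: "partition \<Rightarrow> partition \<Rightarrow> bool" where
  "interlaces a b \<longleftrightarrow> (\<forall>i\<ge>1. a i \<le> b i \<and> b (Suc i) \<le> a i)"

definition rsk_local_rule ::
  "partition \<Rightarrow> partition \<Rightarrow> partition \<Rightarrow> partition \<Rightarrow> nat \<Rightarrow> bool" where
  "rsk_local_rule \<kappa> \<mu> \<nu> \<rho> m \<longleftrightarrow>
     is_partition \<kappa> \<and> is_partition \<mu> \<and> is_partition \<nu> \<and> is_partition \<rho> \<and>
     interlaces \<kappa> \<mu> \<and> interlaces \<kappa> \<nu> \<and> interlaces \<mu> \<rho> \<and> interlaces \<nu> \<rho> \<and>
     \<rho> 1 = m + max (\<mu> 1) (\<nu> 1) \<and>
     (\<forall>i\<ge>2. \<rho> i + \<kappa> (i - 1) = min (\<mu> (i - 1)) (\<nu> (i - 1)) + max (\<mu> i) (\<nu> i))"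

definition d_rsk_local_rule ::
  "nat \<Rightarrow> partition \<Rightarrow> partition \<Rightarrow> partition \<Rightarrow> partition \<Rightarrow> nat \<Rightarrow> bool" where
  "d_rsk_local_rule d \<kappa> \<mu> \<nu> \<rho> m \<longleftrightarrow>
     is_d_partition d \<kappa> \<and> is_d_partition d \<mu> \<and> is_d_partition d \<nu> \<and> is_d_partition d \<rho> \<and>
     interlaces \<kappa> \<mu> \<and> interlaces \<kappa> \<nu> \<and> interlaces \<mu> \<rho> \<and> interlaces \<nu> \<rho> \<and>
     (m = 0 \<or> \<kappa> d = 0) \<and>
     \<rho> 1 + \<kappa> d = m + min (\<mu> d) (\<nu> d) + max (\<mu> 1) (\<nu> 1) \<and>
     (\<forall>i. 2 \<le> i \<and> i \<le> d \<longrightarrow>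
        \<rho> i + \<kappa> (i - 1) = min (\<mu> (i - 1)) (\<nu> (i - 1)) + max (\<mu> i) (\<nu> i))"

text \<open>Cells: the unit cell [i-1,i] x [j-1,j] is named (i,j) by its top-right corner,
  with i,j >= 1 (i = column, j = row counted upward).\<close>

definition young_diagram :: "(nat \<times> nat) set \<Rightarrow> bool" where
  "young_diagram F \<longleftrightarrow> finite F \<and> (\<forall>(i,j)\<in>F. i \<ge> 1 \<and> j \<ge> 1) \<and>
     (\<forall>i j i' j'. (i,j) \<in> F \<and> 1 \<le> i' \<and> i' \<le> i \<and> 1 \<le> j' \<and> j' \<le> j \<longrightarrow> (i',j') \<in> F)"

definition lattice_points :: "(nat \<times> nat) set \<Rightarrow> (nat \<times> nat) set" where
  "lattice_points F = {(0,0)} \<union>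
     {(x,y). \<exists>(i,j)\<in>F. (x = i - 1 \<or> x = i) \<and> (y = j - 1 \<or> y = j)}"

definition rect :: "nat \<times> nat \<Rightarrow> (nat \<times> nat) set" where
  "rect p = {(i,j). 1 \<le> i \<and> i \<le> fst p \<and> 1 \<le> j \<and> j \<le> snd p}"

definition se_chain :: "(nat \<times> nat \<Rightarrow> nat) \<Rightarrow> (nat \<times> nat) set \<Rightarrow> (nat \<times> nat) list \<Rightarrow> bool" where
  "se_chain fill S cs \<longleftrightarrow> set cs \<subseteq> S \<and> (\<forall>c\<in>set cs. fill c \<noteq> 0) \<and>
     (\<forall>k. Suc k < length cs \<longrightarrow>
        fst (cs ! k) < fst (cs ! Suc k) \<and> snd (cs ! Suc k) < snd (cs ! k))"

definition cell_satisfies_rsk ::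
  "(nat \<times> nat \<Rightarrow> nat) \<Rightarrow> (nat \<times> nat \<Rightarrow> partition) \<Rightarrow> nat \<times> nat \<Rightarrow> bool" where
  "cell_satisfies_rsk fill lam c \<longleftrightarrow> (case c of (i,j) \<Rightarrow>
     rsk_local_rule (lam (i - 1, j - 1)) (lam (i - 1, j)) (lam (i, j - 1)) (lam (i, j)) (fill (i,j)))"

definition cell_satisfies_d_rsk ::
  "nat \<Rightarrow> (nat \<times> nat \<Rightarrow> nat) \<Rightarrow> (nat \<times> nat \<Rightarrow> partition) \<Rightarrow> nat \<times> nat \<Rightarrow> bool" where
  "cell_satisfies_d_rsk d fill lam c \<longleftrightarrow> (case c of (i,j) \<Rightarrow>
     d_rsk_local_rule d (lam (i - 1, j - 1)) (lam (i - 1, j)) (lam (i, j - 1)) (lam (i, j)) (fill (i,j)))"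

definition d_rsk_growth_diagram ::
  "nat \<Rightarrow> (nat \<times> nat) set \<Rightarrow> (nat \<times> nat \<Rightarrow> nat) \<Rightarrow> (nat \<times> nat \<Rightarrow> partition) \<Rightarrow> bool" where
  "d_rsk_growth_diagram d F fill lam \<longleftrightarrow>
     young_diagram F \<and>
     (\<forall>q\<in>lattice_points F. is_partition (lam q)) \<and>
     (\<forall>q\<in>lattice_points F. fst q = 0 \<or> snd q = 0 \<longrightarrow> lam q = empty_partition) \<and>
     (\<forall>c\<in>F. cell_satisfies_d_rsk d fill lam c)"

end

theory Submission
  imports Defs "HOL-Library.Sublist"
begin


fun ins_row :: "nat \<Rightarrow> nat list \<Rightarrow> nat option \<times> nat list" where
  "ins_row x [] = (None, [x])"
| "ins_row x (y # ys) = (if x < y then (Some y, x # ys)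
     else (let (b, ys') = ins_row x ys in (b, y # ys')))"

fun ins :: "nat \<Rightarrow> nat list list \<Rightarrow> nat list list" where
  "ins x [] = [[x]]"
| "ins x (r # rs) = (case ins_row x r of (None, r') \<Rightarrow> r' # rs
     | (Some z, r') \<Rightarrow> r' # ins z rs)"

fun newrow :: "nat \<Rightarrow> nat list list \<Rightarrow> nat" where
  "newrow x [] = 0"
| "newrow x (r # rs) = (case ins_row x r of (None, r') \<Rightarrow> 0
     | (Some z, r') \<Rightarrow> Suc (newrow z rs))"

definition insl :: "nat list \<Rightarrow> nat list list \<Rightarrow> nat list list" where
  "insl c T = foldl (\<lambda>T x. ins x T) T c"

definition PT :: "nat list \<Rightarrow> nat list list" where
  "PT w = insl w []"

definition rowf :: "nat list list \<Rightarrow> nat \<Rightarrow> nat list" where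
  "rowf T s = (if s < length T then T ! s else [])"

lemma insl_simps[simp]: "insl [] T = T" "insl (x # c) T = insl c (ins x T)"
  "insl (c @ c') T = insl c' (insl c T)"
  by (simp_all add: insl_def)

lemma PT_snoc: "PT (w @ [x]) = ins x (PT w)"
  by (simp add: PT_def)

lemma rowf_Nil[simp]: "rowf [] s = []" by (simp add: rowf_def)
lemma rowf_Cons0[simp]: "rowf (r # rs) 0 = r" by (simp add: rowf_def)
lemma rowf_ConsS[simp]: "rowf (r # rs) (Suc s) = rowf rs s" by (simp add: rowf_def)

lemma ins_row_None: "ins_row x r = (None, r') \<Longrightarrow> r' = r @ [x] \<and> (\<forall>e\<in>set r. e \<le> x)"
  by (induction x r arbitrary: r' rule: ins_row.induct) (auto split: if_splits prod.splits)

lemma ins_row_Some: "ins_row x r = (Some z, r') \<Longrightarrow>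
   \<exists>u v. r = u @ z # v \<and> r' = u @ x # v \<and> (\<forall>e\<in>set u. e \<le> x) \<and> x < z"
proof (induction x r arbitrary: r' rule: ins_row.induct)
  case (1 x) then show ?case by simp
next
  case (2 x y ys)
  show ?case
  proof (cases "x < y")
    case True then show ?thesis using 2 by force
  next
    case False
    obtain b ys' where e: "ins_row x ys = (b, ys')" by fastforce
    with 2 False have "b = Some z" "r' = y # ys'" by auto
    with 2(1)[OF False] e False obtain u v where "ys = u @ z # v" "ys' = u @ x # v" "\<forall>e\<in>set u. e \<le> x" "x < z"
      by fastforce
    then show ?thesis using \<open>r' = y # ys'\<close> False by (intro exI[of _ "y # u"] exI[of _ v]) auto
  qed
qed

lemma ins_row_cases: "(\<exists>r'. ins_row x r = (None, r')) \<or> (\<exists>z r'. ins_row x r = (Some z, r'))"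
  by (cases "ins_row x r") (metis option.exhaust)

lemma ins_row_sorted: "sorted r \<Longrightarrow> sorted (snd (ins_row x r))"
proof (induction x r rule: ins_row.induct)
  case (1 x) then show ?case by simp
next
  case (2 x y ys)
  show ?case
  proof (cases "x < y")
    case True then show ?thesis using 2(2) by (auto)
  next
    case False
    obtain b ys' where e: "ins_row x ys = (b, ys')" by fastforce
    have s: "sorted ys'" using 2 False e by auto
    have "set ys' \<subseteq> insert x (set ys)"
      using e by (cases b) (auto dest!: ins_row_None ins_row_Some)
    then show ?thesis using False e s 2(2) by auto
  qed
qed

lemma ins_row_app1: "\<exists>e\<in>set r. x < e \<Longrightarrow> ins_row x (r @ s) = (fst (ins_row x r), snd (ins_row x r) @ s)"
  apply (induction x r rule: ins_row.induct)
   apply (auto split: prod.splits)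
  by blast+

lemma ins_row_app2: "\<forall>e\<in>set r. e \<le> x \<Longrightarrow> ins_row x (r @ s) = (fst (ins_row x s), r @ snd (ins_row x s))"
  by (induction r) (auto split: prod.splits)

lemma ins_row_hd: "hd (snd (ins_row z r)) = (if r = [] \<or> z < hd r then z else hd r)"
  by (cases r) (auto split: prod.splits)

lemma ins_row_set: "set (snd (ins_row x r)) \<subseteq> insert x (set r)"
  by (induction x r rule: ins_row.induct) (auto split: prod.splits)

lemma ins_row_bumped: "ins_row x r = (Some z, r') \<Longrightarrow> z \<in> set r"
  by (auto dest!: ins_row_Some)

lemma ins_row_len: "length (snd (ins_row x r)) = length r + (if fst (ins_row x r) = None then 1 else 0)"
  by (induction x r rule: ins_row.induct) (auto split: prod.splits)

lemma ins_row_nonempty: "snd (ins_row x r) \<noteq> []"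
  using ins_row_len[of x r] by auto

lemma rb_row_Some: assumes "sorted r" "x \<le> x'" "ins_row x r = (Some z, r1)" "ins_row x' r1 = (Some z', r2)"
  shows "z \<le> z'"
proof -
  from ins_row_Some[OF assms(3)] obtain u v where uv: "r = u @ z # v" "r1 = u @ x # v" "\<forall>e\<in>set u. e \<le> x" "x < z"
    by blast
  have "ins_row x' r1 = ins_row x' ((u @ [x]) @ v)" using uv by simp
  also have "\<dots> = (fst (ins_row x' v), (u @ [x]) @ snd (ins_row x' v))"
    by (rule ins_row_app2) (use uv assms(2) in auto)
  finally have "ins_row x' v = (Some z', snd (ins_row x' v))" using assms(4) by (metis prod.inject surjective_pairing)
  then have "z' \<in> set v" by (rule ins_row_bumped)
  moreover have "\<forall>e\<in>set v. z \<le> e" using assms(1) uv(1) by (simp add: sorted_append)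
  ultimately show ?thesis by blast
qed

lemma rb_row_None: assumes "x \<le> x'" "ins_row x r = (None, r1)"
  shows "fst (ins_row x' r1) = None"
proof -
  from ins_row_None[OF assms(2)] have "r1 = r @ [x]" "\<forall>e\<in>set r. e \<le> x" by auto
  then have "ins_row x' (r1 @ []) = (fst (ins_row x' []), r1 @ snd (ins_row x' []))"
    using assms(1) by (intro ins_row_app2) auto
  then show ?thesis by simp
qed

lemma ins_sorted: "\<forall>r\<in>set T. sorted r \<Longrightarrow> \<forall>r\<in>set (ins x T). sorted r"
proof (induction x T rule: ins.induct)
  case (1 x) then show ?case by simp
next
  case (2 x r rs)
  have ne: "sorted (snd (ins_row x r))" using 2(2) ins_row_sorted by auto
  show ?case
  proof (cases "ins_row x r" rule: prod.exhaust)
    case (Pair b r')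
    then have "sorted r'" using ne by simp
    show ?thesis
    proof (cases b)
      case None then show ?thesis using Pair \<open>sorted r'\<close> 2(2) by auto
    next
      case (Some z)
      then show ?thesis using Pair \<open>sorted r'\<close> 2(2) 2(1)[OF Pair[symmetric] Some] by auto
    qed
  qed
qed

lemma ins_set: "\<Union>(set ` set (ins x T)) \<subseteq> insert x (\<Union>(set ` set T))"
proof (induction x T rule: ins.induct)
  case (1 x) then show ?case by simp
next
  case (2 x r rs)
  have a: "set (snd (ins_row x r)) \<subseteq> insert x (set r)" by (rule ins_row_set)
  show ?case
  proof (cases "ins_row x r" rule: prod.exhaust)
    case (Pair b r')
    show ?thesis
    proof (cases b)
      case None then show ?thesis using a Pair by auto
    next
      case (Some z)
      have "z \<in> set r" using Pair Some ins_row_bumped by blast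
      then show ?thesis using a Pair Some 2(1)[OF Pair[symmetric] Some] by auto
    qed
  qed
qed

lemma ins_nonempty: "\<forall>r\<in>set T. r \<noteq> [] \<Longrightarrow> \<forall>r\<in>set (ins x T). r \<noteq> []"
proof (induction x T rule: ins.induct)
  case (1 x) then show ?case by simp
next
  case (2 x r rs)
  have ne: "snd (ins_row x r) \<noteq> []" by (rule ins_row_nonempty)
  show ?case
  proof (cases "ins_row x r" rule: prod.exhaust)
    case (Pair b r')
    then have "r' \<noteq> []" using ne by simp
    show ?thesis
    proof (cases b)
      case None then show ?thesis using Pair \<open>r' \<noteq> []\<close> 2(2) by auto
    next
      case (Some z)
      then show ?thesis using Pair \<open>r' \<noteq> []\<close> 2(2) 2(1)[OF Pair[symmetric] Some] by auto
    qed
  qed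
qed

lemma ins_len: "length (rowf (ins x T) s) = length (rowf T s) + (if s = newrow x T then 1 else 0)"
proof (induction x T arbitrary: s rule: ins.induct)
  case (1 x) then show ?case by (simp add: rowf_def)
next
  case (2 x r rs)
  have l: "length (snd (ins_row x r)) = length r + (if fst (ins_row x r) = None then 1 else 0)"
    by (rule ins_row_len)
  show ?case
  proof (cases "ins_row x r" rule: prod.exhaust)
    case (Pair b r')
    show ?thesis
    proof (cases b)
      case None then show ?thesis using l Pair by (cases s) auto
    next
      case (Some z)
      then show ?thesis using l Pair 2(1)[OF Pair[symmetric] Some] by (cases s) auto
    qed
  qed
qed

lemma rb: "\<forall>r\<in>set T. sorted r \<Longrightarrow> x \<le> x' \<Longrightarrow> newrow x' (ins x T) \<le> newrow x T"
proof (induction x T arbitrary: x' rule: ins.induct)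
  case (1 x) then show ?case by (simp split: if_splits)
next
  case (2 x r rs)
  show ?case
  proof (cases "ins_row x r" rule: prod.exhaust)
    case (Pair b r1)
    show ?thesis
    proof (cases b)
      case None
      then have "fst (ins_row x' r1) = None" using rb_row_None \<open>x \<le> x'\<close> Pair by blast
      then show ?thesis using Pair None by (auto split: prod.splits option.splits)
    next
      case (Some z)
      show ?thesis
      proof (cases "ins_row x' r1" rule: prod.exhaust)
        case (Pair b' r2)
        show ?thesis
        proof (cases b')
          case None then show ?thesis using Pair \<open>ins_row x r = (b, r1)\<close> Some by simp
        next
          case (Some z')
          have "z \<le> z'" using rb_row_Some[of r x x' z r1 z' r2] 2(2) \<open>x \<le> x'\<close> Pair Some \<open>ins_row x r = (b, r1)\<close> \<open>b = Some z\<close>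
            by auto
          then have "newrow z' (ins z rs) \<le> newrow z rs"
            using 2(1)[OF \<open>ins_row x r = (b, r1)\<close>[symmetric] \<open>b = Some z\<close>] 2(2) by auto
          then show ?thesis using Pair Some \<open>ins_row x r = (b, r1)\<close> \<open>b = Some z\<close> by simp
        qed
      qed
    qed
  qed
qed



definition dsub :: "nat \<Rightarrow> nat list \<Rightarrow> bool" where
  "dsub k w \<longleftrightarrow> (\<exists>s. subseq s w \<and> sorted_wrt (>) s \<and> length s = k)"

inductive km :: "nat list \<Rightarrow> nat list \<Rightarrow> bool" where
  k1: "x < y \<Longrightarrow> y \<le> z \<Longrightarrow> km (a @ [y,z,x] @ b) (a @ [y,x,z] @ b)"
| k1': "x < y \<Longrightarrow> y \<le> z \<Longrightarrow> km (a @ [y,x,z] @ b) (a @ [y,z,x] @ b)"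
| k2: "x \<le> y \<Longrightarrow> y < z \<Longrightarrow> km (a @ [x,z,y] @ b) (a @ [z,x,y] @ b)"
| k2': "x \<le> y \<Longrightarrow> y < z \<Longrightarrow> km (a @ [z,x,y] @ b) (a @ [x,z,y] @ b)"

abbreviation knuth :: "nat list \<Rightarrow> nat list \<Rightarrow> bool" where
  "knuth \<equiv> km\<^sup>*\<^sup>*"

lemma km_sym: "km u v \<Longrightarrow> km v u"
proof (induction rule: km.induct)
  case (k1 x y z a b) then show ?case by (rule km.k1')
next
  case (k1' x y z a b) then show ?case by (rule km.k1)
next
  case (k2 x y z a b) then show ?case by (rule km.k2')
next
  case (k2' x y z a b) then show ?case by (rule km.k2)
qed

lemma km_ctx: "km u v \<Longrightarrow> km (p @ u @ q) (p @ v @ q)"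
proof (induction rule: km.induct)
  case (k1 x y z a b) then show ?case using km.k1[of x y z "p @ a" "b @ q"] by simp
next
  case (k1' x y z a b) then show ?case using km.k1'[of x y z "p @ a" "b @ q"] by simp
next
  case (k2 x y z a b) then show ?case using km.k2[of x y z "p @ a" "b @ q"] by simp
next
  case (k2' x y z a b) then show ?case using km.k2'[of x y z "p @ a" "b @ q"] by simp
qed

lemma knuth_ctx: "knuth u v \<Longrightarrow> knuth (p @ u @ q) (p @ v @ q)"
  by (induction rule: rtranclp_induct) (auto intro: km_ctx rtranclp.rtrancl_into_rtrancl)

lemma knuth_sym: "knuth u v \<Longrightarrow> knuth v u"
  by (induction rule: rtranclp_induct) (auto intro: km_sym converse_rtranclp_into_rtranclp)

lemma dsub_replace:
  assumes "dsub k (a @ m @ b)"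
    and R: "\<And>s2. subseq s2 m \<Longrightarrow> sorted_wrt (>) s2 \<Longrightarrow> \<exists>s2'. subseq s2' m' \<and> sorted_wrt (>) s2'
        \<and> length s2' = length s2 \<and> (\<forall>e\<in>set s2'. \<exists>e1\<in>set s2. e \<le> e1) \<and> (\<forall>e\<in>set s2'. \<exists>e2\<in>set s2. e2 \<le> e)"
  shows "dsub k (a @ m' @ b)"
proof -
  obtain s where s: "subseq s (a @ m @ b)" "sorted_wrt (>) s" "length s = k"
    using assms(1) unfolding dsub_def by blast
  from s(1) obtain s1 s23 where "s = s1 @ s23" "subseq s1 a" "subseq s23 (m @ b)"
    by (auto elim: subseq_appendE)
  moreover from this(3) obtain s2 s3 where "s23 = s2 @ s3" "subseq s2 m" "subseq s3 b"
    by (auto elim: subseq_appendE)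
  ultimately have d: "s = s1 @ s2 @ s3" "subseq s1 a" "subseq s2 m" "subseq s3 b" by auto
  have so1: "sorted_wrt (>) s1" "sorted_wrt (>) (s2 @ s3)" "\<forall>x\<in>set s1. \<forall>y\<in>set (s2 @ s3). x > y"
    using s(2) unfolding d(1) sorted_wrt_append by blast+
  have so2: "sorted_wrt (>) s2" "sorted_wrt (>) s3" "\<forall>x\<in>set s2. \<forall>y\<in>set s3. x > y"
    using so1(2) unfolding sorted_wrt_append by blast+
  obtain s2' where s2': "subseq s2' m'" "sorted_wrt (>) s2'" "length s2' = length s2"
    "\<forall>e\<in>set s2'. \<exists>e1\<in>set s2. e \<le> e1" "\<forall>e\<in>set s2'. \<exists>e2\<in>set s2. e2 \<le> e"
    using R[OF d(3) so2(1)] by blast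
  have "subseq (s2' @ s3) (m' @ b)"
    using d(4) s2'(1) by (rule list_emb_append_mono[rotated])
  then have "subseq (s1 @ s2' @ s3) (a @ m' @ b)"
    using d(2) by (rule list_emb_append_mono[rotated])
  moreover have "sorted_wrt (>) (s1 @ s2' @ s3)"
  proof -
    have B: "\<forall>x\<in>set s2'. \<forall>y\<in>set s3. x > y"
    proof (intro ballI)
      fix x y assume "x \<in> set s2'" "y \<in> set s3"
      then obtain e2 where "e2 \<in> set s2" "e2 \<le> x" using s2'(5) by blast
      moreover have "e2 > y" using so2(3) \<open>e2 \<in> set s2\<close> \<open>y \<in> set s3\<close> by blast
      ultimately show "x > y" by linarith
    qed
    have A: "\<forall>x\<in>set s1. \<forall>y\<in>set (s2' @ s3). x > y"
    proof (intro ballI)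
      fix x y assume x: "x \<in> set s1" and "y \<in> set (s2' @ s3)"
      then consider "y \<in> set s2'" | "y \<in> set s3" by auto
      then show "x > y"
      proof cases
        case 1
        then obtain e1 where "e1 \<in> set s2" "y \<le> e1" using s2'(4) by blast
        moreover have "x > e1" using so1(3) x \<open>e1 \<in> set s2\<close> by simp
        ultimately show ?thesis by linarith
      next
        case 2 then show ?thesis using so1(3) x by simp
      qed
    qed
    have "sorted_wrt (>) (s2' @ s3)" unfolding sorted_wrt_append using s2'(2) so2(2) B by blast
    then show ?thesis unfolding sorted_wrt_append[of _ s1] using so1(1) A by blast
  qed
  moreover have "length (s1 @ s2' @ s3) = k" using s(3) d(1) s2'(3) by simp
  ultimately show ?thesis unfolding dsub_def by blast
qed

lemma subseq_ConsE: "subseq s (y # ys) \<Longrightarrow> subseq s ys \<or> (\<exists>s'. s = y # s' \<and> subseq s' ys)"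
  by (cases s) (auto split: if_splits)

lemma subseq3: "subseq s [p,q,r] \<Longrightarrow> s \<in> {[],[p],[q],[r],[p,q],[p,r],[q,r],[p,q,r]}"
  by (auto dest!: subseq_ConsE)

lemma self_witness: "subseq (s2::nat list) m' \<Longrightarrow> sorted_wrt (>) s2 \<Longrightarrow> \<exists>s2'. subseq s2' m' \<and> sorted_wrt (>) s2'
        \<and> length s2' = length s2 \<and> (\<forall>e\<in>set s2'. \<exists>e1\<in>set s2. e \<le> e1) \<and> (\<forall>e\<in>set s2'. \<exists>e2\<in>set s2. e2 \<le> e)"
proof -
  assume a: "subseq s2 m'" "sorted_wrt (>) s2"
  have b: "\<forall>e\<in>set s2. \<exists>e1\<in>set s2. e \<le> e1" "\<forall>e\<in>set s2. \<exists>e2\<in>set s2. e2 \<le> e"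
    by force+
  show ?thesis using a b by (intro exI[of _ s2]) simp
qed

lemma km_dsub: "km u v \<Longrightarrow> dsub k u \<Longrightarrow> dsub k v"
proof (induction rule: km.induct)
  case (k1 x y z a b)
  show ?case
  proof (rule dsub_replace[where a=a and b=b and m="[y,z,x]" and m'="[y,x,z]", OF k1(3)])
    fix s2 assume a: "subseq s2 [y,z,x]" "sorted_wrt (>) s2"
    then have m: "s2 \<in> {[],[y],[z],[x],[y,x],[z,x]}" using k1(1,2) apply - apply (drule subseq3) apply (elim insertE emptyE) by simp_all
    show "\<exists>s2'. subseq s2' [y,x,z] \<and> sorted_wrt (>) s2' \<and> length s2' = length s2 \<and>
      (\<forall>e\<in>set s2'. \<exists>e1\<in>set s2. e \<le> e1) \<and> (\<forall>e\<in>set s2'. \<exists>e2\<in>set s2. e2 \<le> e)"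
    proof (cases "s2 = [z,x]")
      case True then show ?thesis using k1(1,2) by (intro exI[of _ "[y,x]"]) simp
    next
      case False
      with m have "subseq s2 [y,x,z]" apply - apply (elim insertE emptyE) by simp_all
      then show ?thesis using a(2) by (rule self_witness)
    qed
  qed
next
  case (k1' x y z a b)
  show ?case
  proof (rule dsub_replace[where a=a and b=b and m="[y,x,z]" and m'="[y,z,x]", OF k1'(3)])
    fix s2 assume a: "subseq s2 [y,x,z]" "sorted_wrt (>) s2"
    then have m: "s2 \<in> {[],[y],[z],[x],[y,x]}" using k1'(1,2) apply - apply (drule subseq3) apply (elim insertE emptyE) by simp_all
    then have "subseq s2 [y,z,x]" apply - apply (elim insertE emptyE) by simp_all
    then show "\<exists>s2'. subseq s2' [y,z,x] \<and> sorted_wrt (>) s2' \<and> length s2' = length s2 \<and>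
      (\<forall>e\<in>set s2'. \<exists>e1\<in>set s2. e \<le> e1) \<and> (\<forall>e\<in>set s2'. \<exists>e2\<in>set s2. e2 \<le> e)"
      using a(2) by (rule self_witness)
  qed
next
  case (k2 x y z a b)
  show ?case
  proof (rule dsub_replace[where a=a and b=b and m="[x,z,y]" and m'="[z,x,y]", OF k2(3)])
    fix s2 assume a: "subseq s2 [x,z,y]" "sorted_wrt (>) s2"
    then have m: "s2 \<in> {[],[x],[z],[y],[z,y]}" using k2(1,2) apply - apply (drule subseq3) apply (elim insertE emptyE) by simp_all
    then have "subseq s2 [z,x,y]" apply - apply (elim insertE emptyE) by simp_all
    then show "\<exists>s2'. subseq s2' [z,x,y] \<and> sorted_wrt (>) s2' \<and> length s2' = length s2 \<and>
      (\<forall>e\<in>set s2'. \<exists>e1\<in>set s2. e \<le> e1) \<and> (\<forall>e\<in>set s2'. \<exists>e2\<in>set s2. e2 \<le> e)"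
      using a(2) by (rule self_witness)
  qed
next
  case (k2' x y z a b)
  show ?case
  proof (rule dsub_replace[where a=a and b=b and m="[z,x,y]" and m'="[x,z,y]", OF k2'(3)])
    fix s2 assume a: "subseq s2 [z,x,y]" "sorted_wrt (>) s2"
    then have m: "s2 \<in> {[],[x],[z],[y],[z,x],[z,y]}" using k2'(1,2) apply - apply (drule subseq3) apply (elim insertE emptyE) by simp_all
    show "\<exists>s2'. subseq s2' [x,z,y] \<and> sorted_wrt (>) s2' \<and> length s2' = length s2 \<and>
      (\<forall>e\<in>set s2'. \<exists>e1\<in>set s2. e \<le> e1) \<and> (\<forall>e\<in>set s2'. \<exists>e2\<in>set s2. e2 \<le> e)"
    proof (cases "s2 = [z,x]")
      case True then show ?thesis using k2'(1,2) by (intro exI[of _ "[z,y]"]) simp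
    next
      case False
      with m have "subseq s2 [x,z,y]" apply - apply (elim insertE emptyE) by simp_all
      then show ?thesis using a(2) by (rule self_witness)
    qed
  qed
qed

lemma knuth_dsub: "knuth u v \<Longrightarrow> dsub k u \<Longrightarrow> dsub k v"
  by (induction rule: rtranclp_induct) (auto intro: km_dsub)

lemma M1: "sorted (z # v) \<Longrightarrow> x < z \<Longrightarrow> knuth (z # v @ [x]) (z # x # v)"
proof (induction v arbitrary: z)
  case Nil then show ?case by simp
next
  case (Cons b v')
  have "x < b" using Cons by auto
  then have "knuth (b # v' @ [x]) (b # x # v')" using Cons by auto
  then have a: "knuth ([z] @ (b # v' @ [x]) @ []) ([z] @ (b # x # v') @ [])" by (rule knuth_ctx)
  have "km ([] @ [z,b,x] @ v') ([] @ [z,x,b] @ v')"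
    by (rule km.k1) (use Cons in auto)
  then show ?case using a by simp
qed

lemma M2: "sorted u \<Longrightarrow> \<forall>e\<in>set u. e \<le> x \<Longrightarrow> x < z \<Longrightarrow> knuth (u @ [z, x]) (z # u @ [x])"
proof (induction u arbitrary: x rule: rev_induct)
  case Nil then show ?case by simp
next
  case (snoc b u0)
  have bx: "b \<le> x" using snoc by auto
  have "km (u0 @ [b,z,x] @ []) (u0 @ [z,b,x] @ [])"
    by (rule km.k2) (use snoc bx in auto)
  moreover have "knuth (u0 @ [z, b]) (z # u0 @ [b])"
    using snoc bx by (intro snoc.IH) (auto simp: sorted_append)
  then have "knuth ([] @ (u0 @ [z, b]) @ [x]) ([] @ (z # u0 @ [b]) @ [x])" by (rule knuth_ctx)
  ultimately show ?case by simp
qed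

lemma row_knuth: assumes "sorted r" "ins_row x r = (Some z, r')"
  shows "knuth (r @ [x]) ([z] @ r')"
proof -
  from ins_row_Some[OF assms(2)] obtain u v where uv: "r = u @ z # v" "r' = u @ x # v" "\<forall>e\<in>set u. e \<le> x" "x < z"
    by blast
  have su: "sorted u" "sorted (z # v)" using assms(1) uv(1) by (auto simp: sorted_append)
  have "knuth (u @ (z # v @ [x]) @ []) (u @ (z # x # v) @ [])"
    by (rule knuth_ctx) (rule M1[OF su(2) uv(4)])
  moreover have "knuth ([] @ (u @ [z, x]) @ v) ([] @ (z # u @ [x]) @ v)"
    by (rule knuth_ctx) (rule M2[OF su(1) uv(3,4)])
  ultimately show ?thesis using uv by simp
qed

definition rw :: "nat list list \<Rightarrow> nat list" where
  "rw T = concat (rev T)"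

lemma ins_knuth: "\<forall>r\<in>set T. sorted r \<Longrightarrow> knuth (rw (ins x T)) (rw T @ [x])"
proof (induction x T rule: ins.induct)
  case (1 x) then show ?case by (simp add: rw_def)
next
  case (2 x r rs)
  show ?case
  proof (cases "ins_row x r" rule: prod.exhaust)
    case (Pair b r')
    show ?thesis
    proof (cases b)
      case None
      then show ?thesis using Pair ins_row_None[of x r r'] by (simp add: rw_def)
    next
      case (Some z)
      have IH: "knuth (rw (ins z rs)) (rw rs @ [z])" using 2(1)[OF Pair[symmetric] Some] 2(2) by auto
      have a: "knuth ([] @ rw (ins z rs) @ r') ([] @ (rw rs @ [z]) @ r')" by (rule knuth_ctx[OF IH])
      have "knuth (r @ [x]) ([z] @ r')" using row_knuth 2(2) Pair Some by auto
      then have "knuth ([z] @ r') (r @ [x])" by (rule knuth_sym)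
      then have "knuth (rw rs @ ([z] @ r') @ []) (rw rs @ (r @ [x]) @ [])" by (rule knuth_ctx)
      then show ?thesis using a Pair Some by (simp add: rw_def)
    qed
  qed
qed

lemma PT_sorted: "\<forall>r\<in>set (PT w). sorted r"
proof (induction w rule: rev_induct)
  case Nil then show ?case by (simp add: PT_def)
next
  case (snoc x w) then show ?case unfolding PT_snoc by (rule ins_sorted)
qed

lemma PT_knuth: "knuth (rw (PT w)) w"
proof (induction w rule: rev_induct)
  case Nil then show ?case by (simp add: PT_def rw_def)
next
  case (snoc x w)
  have "knuth (rw (ins x (PT w))) (rw (PT w) @ [x])" using ins_knuth PT_sorted by blast
  moreover have "knuth ([] @ rw (PT w) @ [x]) ([] @ w @ [x])" by (rule knuth_ctx[OF snoc])
  ultimately show ?case by (simp add: PT_snoc)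
qed

definition fcol :: "nat list list \<Rightarrow> bool" where
  "fcol T \<longleftrightarrow> (\<forall>r\<in>set T. r \<noteq> []) \<and> sorted_wrt (<) (map hd T)"

lemma ins_fcol: "fcol T \<Longrightarrow> fcol (ins x T)"
proof (induction x T rule: ins.induct)
  case (1 x) then show ?case by (simp add: fcol_def)
next
  case (2 x r rs)
  have ne: "\<forall>r\<in>set (ins x (r # rs)). r \<noteq> []" using ins_nonempty 2(2) unfolding fcol_def by blast
  have tr: "transp ((<) :: nat \<Rightarrow> nat \<Rightarrow> bool)" by (simp add: transp_def)
  show ?case
  proof (cases "ins_row x r" rule: prod.exhaust)
    case (Pair b r')
    have hd: "hd r' = (if r = [] \<or> x < hd r then x else hd r)" using ins_row_hd[of x r] Pair by simp
    show ?thesis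
    proof (cases b)
      case None
      then have "r' = r @ [x]" using Pair ins_row_None by blast
      then have "hd r' = hd r" using 2(2) by (simp add: fcol_def)
      then show ?thesis using ne 2(2) Pair None by (simp add: fcol_def)
    next
      case (Some z)
      from ins_row_Some[of x r z r'] Pair Some obtain u v where uv: "r = u @ z # v" "\<forall>e\<in>set u. e \<le> x" "x < z"
        by auto
      have hr: "hd r' \<le> x" "hd r' \<le> hd r" using hd uv by auto
      have fr: "fcol rs" using 2(2) by (simp add: fcol_def)
      have IH: "fcol (ins z rs)" using 2(1)[OF Pair[symmetric] Some fr] .
      have "hd r' < hd (hd (ins z rs))"
      proof (cases rs)
        case Nil then show ?thesis using hr uv by simp
      next
        case (Cons r2 rs2)
        have "hd r < hd r2" using 2(2) Cons by (simp add: fcol_def)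
        moreover have "hd (hd (ins z rs)) = hd (snd (ins_row z r2))"
          using Cons by (cases "ins_row z r2") (auto split: option.splits)
        ultimately show ?thesis using ins_row_hd[of z r2] hr uv by auto
      qed
      moreover have "ins z rs \<noteq> []" by (cases rs) (auto split: prod.splits option.splits)
      ultimately show ?thesis using ne IH Pair Some
        by (cases "ins z rs") (auto simp: fcol_def sorted_wrt2[OF tr])
    qed
  qed
qed

lemma PT_fcol: "fcol (PT w)"
  by (induction w rule: rev_induct) (simp_all add: PT_snoc ins_fcol, simp add: PT_def fcol_def)

lemma subseq_hd_concat: "\<forall>r\<in>set L. r \<noteq> [] \<Longrightarrow> subseq (map hd L) (concat L)"
proof (induction L)
  case Nil then show ?case by simp
next
  case (Cons r L)
  then obtain h t where "r = h # t" by (cases r) auto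
  then show ?case using Cons by (auto intro: subseq_drop_many)
qed

lemma fcol_dsub: "fcol T \<Longrightarrow> dsub (length T) (rw T)"
proof -
  assume f: "fcol T"
  have "subseq (map hd (rev T)) (concat (rev T))"
    by (rule subseq_hd_concat) (use f in \<open>auto simp: fcol_def\<close>)
  moreover have "sorted_wrt (>) (map hd (rev T))"
    using f by (simp add: fcol_def rev_map[symmetric] sorted_wrt_rev)
  ultimately show ?thesis unfolding dsub_def rw_def by (intro exI[of _ "map hd (rev T)"]) simp
qed

lemma PT_dsub: "dsub (length (PT w)) w"
  using knuth_dsub[OF PT_knuth fcol_dsub[OF PT_fcol]] .

lemma sorted_wrt_take': "sorted_wrt P xs \<Longrightarrow> sorted_wrt P (take n xs)"
proof (induction xs arbitrary: n)
  case Nil then show ?case by simp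
next
  case (Cons a xs) then show ?case by (cases n) (auto dest: in_set_takeD)
qed

lemma dsub_le: "dsub k w \<Longrightarrow> k' \<le> k \<Longrightarrow> dsub k' w"
  unfolding dsub_def
proof (elim exE conjE)
  fix s assume h: "subseq s w" "sorted_wrt (>) s" "length s = k" "k' \<le> k"
  have 1: "subseq (take k' s) s" by (rule prefix_imp_subseq[OF take_is_prefix])
  have 2: "subseq (take k' s) w" using 1 h(1) by (rule subseq_order.order_trans)
  have 3: "sorted_wrt (>) (take k' s)" using h(2) by (rule sorted_wrt_take')
  have 4: "length (take k' s) = k'" using h(3,4) by simp
  show "\<exists>s. subseq s w \<and> sorted_wrt (>) s \<and> length s = k'"
    using 2 3 4 by (intro exI[of _ "take k' s"]) simp
qed



definition decomp :: "nat \<Rightarrow> nat list list \<Rightarrow> nat list list \<Rightarrow> (nat \<Rightarrow> nat) \<Rightarrow> bool" where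
  "decomp j T T' a \<longleftrightarrow> (\<forall>s. rowf T s = rowf T' s @ replicate (a s) j)"

definition bumpj :: "(nat \<Rightarrow> nat) \<Rightarrow> nat \<Rightarrow> nat \<Rightarrow> nat" where
  "bumpj a s0 = (if 0 < a s0 then a(s0 := a s0 - 1, Suc s0 := a (Suc s0) + 1) else a)"

lemma ins_row_all_le: "\<forall>e\<in>set r. e \<le> x \<Longrightarrow> ins_row x r = (None, r @ [x])"
  by (induction r) auto

lemma decomp_Cons: "decomp j (r # rs) (r' # rs') a \<longleftrightarrow> r = r' @ replicate (a 0) j \<and> decomp j rs rs' (\<lambda>s. a (Suc s))"
  unfolding decomp_def
  apply (rule iffI)
   apply (metis rowf_Cons0 rowf_ConsS)
  apply (intro allI)
  subgoal for s by (cases s) auto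
  done

lemma decomp_Nil_T: "decomp j (r # rs) [] a \<longleftrightarrow> r = replicate (a 0) j \<and> decomp j rs [] (\<lambda>s. a (Suc s))"
  unfolding decomp_def
  apply (rule iffI)
   apply (metis rowf_Cons0 rowf_ConsS rowf_Nil append_Nil)
  apply (intro allI)
  subgoal for s by (cases s) auto
  done

lemma decomp_T_Nil: "decomp j [] (r' # rs') a \<longleftrightarrow> r' = [] \<and> a 0 = 0 \<and> decomp j [] rs' (\<lambda>s. a (Suc s))"
  unfolding decomp_def
  apply (rule iffI)
   apply (metis rowf_Cons0 rowf_ConsS rowf_Nil Nil_is_append_conv replicate_empty)
  apply (intro allI)
  subgoal for s by (cases s) auto
  done

lemma decomp_Nil_Nil: "decomp j [] [] a \<longleftrightarrow> (\<forall>s. a s = 0)"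
  unfolding decomp_def by simp

lemma L2: "decomp j T T' a \<Longrightarrow> (\<forall>r\<in>set T. \<forall>e\<in>set r. e \<le> j) \<Longrightarrow> decomp j (ins j T) T' (a(0 := Suc (a 0)))"
proof (cases T)
  case Nil
  assume d: "decomp j T T' a"
  then have "rowf T' 0 = []" "a 0 = 0" using Nil unfolding decomp_def by (metis Nil_is_append_conv replicate_empty rowf_Nil)+
  then show ?thesis using d Nil unfolding decomp_def
    apply (intro allI)
    subgoal for s by (cases s) auto
    done
next
  case (Cons r rs)
  assume d: "decomp j T T' a" and le: "\<forall>r\<in>set T. \<forall>e\<in>set r. e \<le> j"
  have "ins_row j r = (None, r @ [j])" using le Cons by (intro ins_row_all_le) auto
  then have "ins j T = (r @ [j]) # rs" using Cons by simp
  then show ?thesis using d Cons unfolding decomp_def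
    apply (intro allI)
    subgoal for s apply (cases s)
       apply (metis fun_upd_same replicate_Suc replicate_append_same append_assoc rowf_Cons0)
      by (metis fun_upd_other nat.distinct(1) rowf_ConsS)
    done
qed

lemma decomp_le: "decomp j T T' a \<Longrightarrow> (\<forall>r\<in>set T'. \<forall>e\<in>set r. e \<le> j) \<Longrightarrow> (\<forall>r\<in>set T. \<forall>e\<in>set r. e \<le> j)"
proof (intro ballI)
  fix r e assume d: "decomp j T T' a" and le: "\<forall>r\<in>set T'. \<forall>e\<in>set r. e \<le> j" and r: "r \<in> set T" and e: "e \<in> set r"
  from r obtain s where s: "s < length T" "T ! s = r" by (auto simp: in_set_conv_nth)
  then have "r = rowf T' s @ replicate (a s) j" using d unfolding decomp_def rowf_def by (metis)
  moreover have "\<forall>e\<in>set (rowf T' s). e \<le> j" using le by (auto simp: rowf_def)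
  ultimately show "e \<le> j" using e by auto
qed

lemma bumpj_Suc: "bumpj a (Suc n) 0 = a 0" "bumpj a (Suc n) (Suc s) = bumpj (\<lambda>s. a (Suc s)) n s"
  by (auto simp: bumpj_def)

lemma rep_bump: "0 < k \<Longrightarrow> ins_row x (replicate k j) = (Some j, x # replicate (k - 1) j) \<or> \<not> x < j"
  by (cases k) auto

lemma L1: "\<forall>r\<in>set T'. sorted r \<Longrightarrow> \<forall>r\<in>set T'. \<forall>e\<in>set r. e < j \<Longrightarrow> decomp j T T' a \<Longrightarrow> x < j
  \<Longrightarrow> decomp j (ins x T) (ins x T') (bumpj a (newrow x T'))"
proof (induction T' arbitrary: T a x)
  case Nil
  show ?case
  proof (cases T)
    case Nil
    then have "\<forall>s. a s = 0" using Nil.prems(3) \<open>T = []\<close> by (simp add: decomp_Nil_Nil)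
    then show ?thesis using Nil by (simp add: decomp_def bumpj_def rowf_def)
  next
    case (Cons r rs)
    have r: "r = replicate (a 0) j" and drs: "decomp j rs [] (\<lambda>s. a (Suc s))"
      using Nil.prems(3) Cons by (auto simp: decomp_Nil_T)
    show ?thesis
    proof (cases "a 0")
      case 0
      then have "ins x T = [x] # rs" using Cons r by simp
      moreover have "bumpj a (newrow x []) = a" using 0 by (simp add: bumpj_def)
      ultimately show ?thesis using drs 0 by (simp add: decomp_Cons)
    next
      case (Suc k)
      then have "ins x T = (x # replicate k j) # ins j rs" using Cons r Nil.prems(4) by simp
      moreover have "decomp j (ins j rs) [] ((\<lambda>s. a (Suc s))(0 := Suc (a (Suc 0))))"
        using drs by (rule L2) (use drs decomp_le in \<open>auto\<close>)
      moreover have "(\<lambda>s. bumpj a 0 (Suc s)) = (\<lambda>s. a (Suc s))(0 := Suc (a (Suc 0)))"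
        using Suc by (auto simp: bumpj_def fun_eq_iff)
      moreover have "bumpj a 0 0 = k" using Suc by (simp add: bumpj_def)
      ultimately show ?thesis by (simp add: decomp_Cons)
    qed
  qed
next
  case (Cons r' rs')
  have srt: "sorted r'" "\<forall>r\<in>set rs'. sorted r'" using Cons.prems(1) by auto
  have lt: "\<forall>e\<in>set r'. e < j" "\<forall>r\<in>set rs'. \<forall>e\<in>set r. e < j" using Cons.prems(2) by auto
  show ?case
  proof (cases T)
    case Nil
    then have h: "r' = []" "a 0 = 0" "decomp j [] rs' (\<lambda>s. a (Suc s))"
      using Cons.prems(3) by (auto simp: decomp_T_Nil)
    then have "ins x (r' # rs') = [x] # rs'" "newrow x (r' # rs') = 0" by auto
    moreover have "bumpj a 0 = a" using h by (simp add: bumpj_def)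
    moreover have "ins x T = [[x]]" using Nil by simp
    ultimately show ?thesis using h by (simp add: decomp_Cons)
  next
    case (Cons r rs)
    have r: "r = r' @ replicate (a 0) j" and drs: "decomp j rs rs' (\<lambda>s. a (Suc s))"
      using Cons.prems(3) \<open>T = r # rs\<close> by (auto simp: decomp_Cons)
    show ?thesis
    proof (cases "\<exists>e\<in>set r'. x < e")
      case True
      obtain b r'' where e: "ins_row x r' = (b, r'')" by fastforce
      have "b \<noteq> None"
      proof
        assume "b = None"
        then show False using ins_row_None[of x r' r''] e True by auto
      qed
      then obtain z where bz: "b = Some z" by auto
      have zr: "z \<in> set r'" using e bz ins_row_bumped by blast
      then have zj: "z < j" using lt by auto
      have "ins_row x r = (Some z, r'' @ replicate (a 0) j)"
        using ins_row_app1[OF True, of "replicate (a 0) j"] e bz r by simp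
      then have "ins x T = (r'' @ replicate (a 0) j) # ins z rs" using \<open>T = r # rs\<close> by simp
      moreover have "ins x (r' # rs') = r'' # ins z rs'" "newrow x (r' # rs') = Suc (newrow z rs')"
        using e bz by auto
      moreover have IH: "decomp j (ins z rs) (ins z rs') (bumpj (\<lambda>s. a (Suc s)) (newrow z rs'))"
        using Cons.IH[OF _ lt(2) drs zj] Cons.prems(1) by auto
      moreover have "decomp j ((r'' @ replicate (a 0) j) # ins z rs) (r'' # ins z rs') (bumpj a (Suc (newrow z rs')))"
        unfolding decomp_Cons bumpj_Suc using IH by simp
      ultimately show ?thesis by simp
    next
      case False
      then have le: "\<forall>e\<in>set r'. e \<le> x" by auto
      have "ins_row x r' = (None, r' @ [x])" using le by (rule ins_row_all_le)
      then have t': "ins x (r' # rs') = (r' @ [x]) # rs'" "newrow x (r' # rs') = 0" by auto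
      have app: "ins_row x r = (fst (ins_row x (replicate (a 0) j)), r' @ snd (ins_row x (replicate (a 0) j)))"
        using ins_row_app2[OF le, of "replicate (a 0) j"] r by simp
      show ?thesis
      proof (cases "a 0")
        case 0
        then have "ins x T = (r' @ [x]) # rs" using app \<open>T = r # rs\<close> by simp
        moreover have "bumpj a 0 = a" using 0 by (simp add: bumpj_def)
        ultimately show ?thesis using t' drs 0 by (simp add: decomp_Cons)
      next
        case (Suc k)
        then have "ins x T = (r' @ x # replicate k j) # ins j rs" using app \<open>T = r # rs\<close> Cons.prems(4) by simp
        moreover have "decomp j (ins j rs) rs' ((\<lambda>s. a (Suc s))(0 := Suc (a (Suc 0))))"
          using drs by (rule L2) (use drs decomp_le lt(2) in \<open>fastforce\<close>)
        moreover have "(\<lambda>s. bumpj a 0 (Suc s)) = (\<lambda>s. a (Suc s))(0 := Suc (a (Suc 0)))"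
          using Suc by (auto simp: bumpj_def fun_eq_iff)
        moreover have "bumpj a 0 0 = k" using Suc by (simp add: bumpj_def)
        ultimately show ?thesis using t' by (simp add: decomp_Cons)
      qed
    qed
  qed
qed

fun cnt :: "nat list \<Rightarrow> nat list list \<Rightarrow> nat \<Rightarrow> nat" where
  "cnt [] T s = 0"
| "cnt (x # c) T s = (if s = newrow x T then 1 else 0) + cnt c (ins x T) s"

definition G :: "(nat \<Rightarrow> nat) \<Rightarrow> (nat \<Rightarrow> nat) \<Rightarrow> nat \<Rightarrow> nat" where
  "G a n s = a s - min (a s) (n s) + (case s of 0 \<Rightarrow> 0 | Suc s' \<Rightarrow> min (a s') (n s'))"

lemma cnt_zero: "sorted (x # c) \<Longrightarrow> \<forall>r\<in>set T. sorted r \<Longrightarrow> newrow x T < s \<Longrightarrow> cnt c (ins x T) s = 0"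
proof (induction c arbitrary: x T)
  case Nil then show ?case by simp
next
  case (Cons y c)
  have xy: "x \<le> y" using Cons.prems(1) by simp
  have "newrow y (ins x T) \<le> newrow x T" by (rule rb[OF Cons.prems(2) xy])
  then have lt: "newrow y (ins x T) < s" using Cons.prems(3) by simp
  have "cnt c (ins y (ins x T)) s = 0"
    using Cons.IH[of y "ins x T"] Cons.prems(1) ins_sorted[OF Cons.prems(2)] lt by auto
  then show ?case using lt by simp
qed

lemma G_step: assumes "\<forall>s>s0. n' s = 0"
  shows "G (bumpj a s0) n' = G a (\<lambda>s. (if s = s0 then 1 else 0) + n' s)"
proof
  fix s
  consider "s < s0" | "s = s0" | "s = Suc s0" | "s > Suc s0" by linarith
  then show "G (bumpj a s0) n' s = G a (\<lambda>s. (if s = s0 then 1 else 0) + n' s) s"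
  proof cases
    case 1
    then show ?thesis by (cases s) (auto simp: G_def bumpj_def)
  next
    case 2
    then show ?thesis by (cases s) (auto simp: G_def bumpj_def min_def)
  next
    case 3
    then show ?thesis using assms by (auto simp: G_def bumpj_def min_def)
  next
    case 4
    then obtain s' where "s = Suc s'" "s' > s0" by (cases s) auto
    then show ?thesis using assms by (auto simp: G_def bumpj_def)
  qed
qed

lemma G_zero: "G a (\<lambda>s. 0) = a"
  by (auto simp: G_def fun_eq_iff split: nat.splits)

lemma ins_lt: "\<forall>r\<in>set T. \<forall>e\<in>set r. e < j \<Longrightarrow> x < j \<Longrightarrow> \<forall>r\<in>set (ins x T). \<forall>e\<in>set r. e < j"
  using ins_set[of x T] by blast

lemma L1s: "sorted c \<Longrightarrow> \<forall>x\<in>set c. x < j \<Longrightarrow> \<forall>r\<in>set T'. sorted r \<Longrightarrow> \<forall>r\<in>set T'. \<forall>e\<in>set r. e < j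
  \<Longrightarrow> decomp j T T' a \<Longrightarrow> decomp j (insl c T) (insl c T') (G a (cnt c T'))"
proof (induction c arbitrary: T T' a)
  case Nil
  have "cnt [] T' = (\<lambda>s. 0)" by (rule ext) simp
  then show ?case using Nil G_zero by simp
next
  case (Cons x c)
  have xj: "x < j" using Cons.prems(2) by simp
  have d1: "decomp j (ins x T) (ins x T') (bumpj a (newrow x T'))"
    by (rule L1[OF Cons.prems(3,4,5) xj])
  have IH: "decomp j (insl c (ins x T)) (insl c (ins x T')) (G (bumpj a (newrow x T')) (cnt c (ins x T')))"
    by (rule Cons.IH[OF _ _ ins_sorted[OF Cons.prems(3)] ins_lt[OF Cons.prems(4) xj] d1])
      (use Cons.prems(1,2) in auto)
  have z: "\<forall>s>newrow x T'. cnt c (ins x T') s = 0"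
    using cnt_zero[OF Cons.prems(1) Cons.prems(3)] by blast
  have "cnt (x # c) T' = (\<lambda>s. (if s = newrow x T' then 1 else 0) + cnt c (ins x T') s)"
    by (rule ext) simp
  then have "G (bumpj a (newrow x T')) (cnt c (ins x T')) = G a (cnt (x # c) T')"
    using G_step[OF z] by simp
  then show ?case using IH by (simp only: insl_simps(2))
qed

lemma len_insl: "length (rowf (insl c T) s) = length (rowf T s) + cnt c T s"
proof (induction c arbitrary: T)
  case Nil then show ?case by simp
next
  case (Cons x c)
  have "length (rowf (insl (x # c) T) s) = length (rowf (ins x T) s) + cnt c (ins x T) s"
    using Cons.IH[of "ins x T"] by simp
  also have "\<dots> = length (rowf T s) + cnt (x # c) T s" by (simp add: ins_len)
  finally show ?case .
qed

lemma L2s: "decomp j T T' a \<Longrightarrow> \<forall>r\<in>set T'. \<forall>e\<in>set r. e \<le> j \<Longrightarrow> decomp j (insl (replicate m j) T) T' (a(0 := a 0 + m))"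
proof (induction m arbitrary: T a)
  case 0 then show ?case by simp
next
  case (Suc m)
  have "decomp j (ins j T) T' (a(0 := Suc (a 0)))"
    by (rule L2[OF Suc.prems(1)]) (rule decomp_le[OF Suc.prems])
  then have X: "decomp j (insl (replicate m j) (ins j T)) T' ((a(0 := Suc (a 0)))(0 := (a(0 := Suc (a 0))) 0 + m))"
    by (rule Suc.IH[OF _ Suc.prems(2)])
  have e1: "(a(0 := Suc (a 0)))(0 := (a(0 := Suc (a 0))) 0 + m) = a(0 := a 0 + Suc m)"
    by (simp add: fun_eq_iff)
  have e2: "insl (replicate (Suc m) j) T = insl (replicate m j) (ins j T)" by simp
  show ?case unfolding e2 e1[symmetric] by (rule X)
qed

lemma PT_set: "\<Union>(set ` set (PT w)) \<subseteq> set w"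
proof (induction w rule: rev_induct)
  case Nil then show ?case by (simp add: PT_def)
next
  case (snoc x w)
  have "\<Union>(set ` set (ins x (PT w))) \<subseteq> insert x (set w)" using ins_set[of x "PT w"] snoc by blast
  then show ?case by (simp add: PT_snoc)
qed

lemma DEC: "\<forall>x\<in>set w. x \<le> j \<Longrightarrow> \<exists>a. decomp j (PT w) (PT (filter (\<lambda>y. y < j) w)) a"
proof (induction w rule: rev_induct)
  case Nil then show ?case by (auto simp: PT_def decomp_def)
next
  case (snoc x w)
  have pw: "\<forall>x\<in>set w. x \<le> j" using snoc.prems by simp
  from snoc.IH[OF pw] obtain a where d: "decomp j (PT w) (PT (filter (\<lambda>y. y < j) w)) a" ..
  have lt: "\<forall>r\<in>set (PT (filter (\<lambda>y. y < j) w)). \<forall>e\<in>set r. e < j"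
  proof (intro ballI)
    fix r e assume "r \<in> set (PT (filter (\<lambda>y. y < j) w))" "e \<in> set r"
    then have "e \<in> \<Union>(set ` set (PT (filter (\<lambda>y. y < j) w)))" by blast
    then have "e \<in> set (filter (\<lambda>y. y < j) w)" using PT_set[of "filter (\<lambda>y. y < j) w"] by blast
    then show "e < j" by simp
  qed
  have le: "\<forall>r\<in>set (PT (filter (\<lambda>y. y < j) w)). \<forall>e\<in>set r. e \<le> j"
    using lt by (meson less_imp_le)
  show ?case
  proof (cases "x < j")
    case True
    have f: "PT (filter (\<lambda>y. y < j) (w @ [x])) = ins x (PT (filter (\<lambda>y. y < j) w))"
      using True by (simp add: PT_snoc)
    have "decomp j (ins x (PT w)) (ins x (PT (filter (\<lambda>y. y < j) w))) (bumpj a (newrow x (PT (filter (\<lambda>y. y < j) w))))"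
      by (rule L1[OF PT_sorted lt d True])
    then have "decomp j (PT (w @ [x])) (PT (filter (\<lambda>y. y < j) (w @ [x]))) (bumpj a (newrow x (PT (filter (\<lambda>y. y < j) w))))"
      unfolding f PT_snoc .
    then show ?thesis by (intro exI[where x="bumpj a (newrow x (PT (filter (\<lambda>y. y < j) w)))"])
  next
    case False
    have "x \<le> j" using snoc.prems by simp
    with False have xj: "x = j" by simp
    have f: "PT (filter (\<lambda>y. y < j) (w @ [x])) = PT (filter (\<lambda>y. y < j) w)"
      using False by simp
    have "decomp j (ins x (PT w)) (PT (filter (\<lambda>y. y < j) w)) (a(0 := Suc (a 0)))"
      unfolding xj by (rule L2[OF d decomp_le[OF d le]])
    then have "decomp j (PT (w @ [x])) (PT (filter (\<lambda>y. y < j) (w @ [x]))) (a(0 := Suc (a 0)))"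
      unfolding f PT_snoc .
    then show ?thesis by (intro exI[where x="a(0 := Suc (a 0))"])
  qed
qed

lemma decomp_len: "decomp j X Y a \<Longrightarrow> length (rowf X s) = length (rowf Y s) + a s"
  unfolding decomp_def by simp

lemma PT_app: "PT (u @ v) = insl v (PT u)"
  by (simp add: PT_def)

lemma cell_shape:
  fixes W c :: "nat list" and m j s :: nat
  assumes W: "\<forall>x\<in>set W. x \<le> Suc j" and c: "sorted c" "\<forall>x\<in>set c. x \<le> j"
  shows "length (rowf (PT (W @ c @ replicate m (Suc j))) s) =
    max (length (rowf (PT W) s)) (length (rowf (PT (filter (\<lambda>y. y < Suc j) W @ c)) s))
    + (case s of 0 \<Rightarrow> m | Suc s' \<Rightarrow> min (length (rowf (PT W) s')) (length (rowf (PT (filter (\<lambda>y. y < Suc j) W @ c)) s'))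
          - length (rowf (PT (filter (\<lambda>y. y < Suc j) W)) s'))"
proof -
  define T' where "T' = PT (filter (\<lambda>y. y < Suc j) W)"
  obtain a where d: "decomp (Suc j) (PT W) T' a" using DEC[OF W] unfolding T'_def by blast
  have lt: "\<forall>r\<in>set T'. \<forall>e\<in>set r. e < Suc j"
  proof (intro ballI)
    fix r e assume "r \<in> set T'" "e \<in> set r"
    then have "e \<in> \<Union>(set ` set T')" by blast
    then have "e \<in> set (filter (\<lambda>y. y < Suc j) W)" using PT_set[of "filter (\<lambda>y. y < Suc j) W"] unfolding T'_def by blast
    then show "e < Suc j" by simp
  qed
  have clt: "\<forall>x\<in>set c. x < Suc j" using c(2) by auto
  define n where "n = cnt c T'"
  have d1: "decomp (Suc j) (insl c (PT W)) (insl c T') (G a n)"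
    unfolding n_def by (rule L1s[OF c(1) clt PT_sorted[of "filter (\<lambda>y. y < Suc j) W", folded T'_def] lt d])
  have ic: "insl c T' = PT (filter (\<lambda>y. y < Suc j) W @ c)" unfolding T'_def PT_app ..
  have le2: "\<forall>r\<in>set (insl c T'). \<forall>e\<in>set r. e \<le> Suc j"
  proof (intro ballI)
    fix r e assume "r \<in> set (insl c T')" "e \<in> set r"
    then have "e \<in> \<Union>(set ` set (PT (filter (\<lambda>y. y < Suc j) W @ c)))" unfolding ic by blast
    then have "e \<in> set (filter (\<lambda>y. y < Suc j) W @ c)" using PT_set[of "filter (\<lambda>y. y < Suc j) W @ c"] by blast
    then show "e \<le> Suc j" using c(2) by auto
  qed
  have d2: "decomp (Suc j) (insl (replicate m (Suc j)) (insl c (PT W))) (insl c T') ((G a n)(0 := G a n 0 + m))"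
    by (rule L2s[OF d1 le2])
  have e: "PT (W @ c @ replicate m (Suc j)) = insl (replicate m (Suc j)) (insl c (PT W))"
    by (simp add: PT_def)
  have l1: "length (rowf (PT (W @ c @ replicate m (Suc j))) s) = length (rowf (insl c T') s) + ((G a n)(0 := G a n 0 + m)) s"
    unfolding e by (rule decomp_len[OF d2])
  have mu: "\<And>s. length (rowf (PT W) s) = length (rowf T' s) + a s" by (rule decomp_len[OF d])
  have nu: "\<And>s. length (rowf (insl c T') s) = length (rowf T' s) + n s" unfolding n_def by (rule len_insl)
  show ?thesis
    unfolding l1 ic[symmetric] mu nu T'_def[symmetric]
    by (cases s) (auto simp: G_def min_def max_def)
qed



definition colw :: "(nat \<times> nat \<Rightarrow> nat) \<Rightarrow> nat \<Rightarrow> nat \<Rightarrow> nat list" where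
  "colw fill a j = concat (map (\<lambda>y. replicate (fill (a, y)) y) [1..<Suc j])"

definition word :: "(nat \<times> nat \<Rightarrow> nat) \<Rightarrow> nat \<Rightarrow> nat \<Rightarrow> nat list" where
  "word fill i j = concat (map (\<lambda>a. colw fill a j) [1..<Suc i])"

definition sh :: "nat list list \<Rightarrow> nat \<Rightarrow> nat" where
  "sh T s = (if s = 0 then 0 else length (rowf T (s - 1)))"

lemma colw_0[simp]: "colw fill a 0 = []" by (simp add: colw_def)
lemma colw_Suc: "colw fill a (Suc j) = colw fill a j @ replicate (fill (a, Suc j)) (Suc j)"
  by (simp add: colw_def)
lemma word_0[simp]: "word fill 0 j = []" by (simp add: word_def)
lemma word_Suc: "word fill (Suc i) j = word fill i j @ colw fill (Suc i) j"
  by (simp add: word_def)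
lemma word_j0[simp]: "word fill i 0 = []" by (simp add: word_def)

lemma colw_set: "y \<in> set (colw fill a j) \<longleftrightarrow> 1 \<le> y \<and> y \<le> j \<and> fill (a, y) \<noteq> 0"
  by (auto simp: colw_def)

lemma word_set: "y \<in> set (word fill i j) \<Longrightarrow> y \<le> j"
  by (auto simp: word_def colw_def)

lemma colw_sorted: "sorted (colw fill a j)"
proof (induction j)
  case 0 then show ?case by simp
next
  case (Suc j)
  have "\<forall>y\<in>set (colw fill a j). y \<le> Suc j" using colw_set[of _ fill a j] by auto
  then show ?case using Suc by (auto simp: colw_Suc sorted_append)
qed

lemma colw_filter: "filter (\<lambda>y. y < Suc j) (colw fill a (Suc j)) = colw fill a j"
proof -
  have "\<forall>y\<in>set (colw fill a j). y < Suc j" using colw_set[of _ fill a j] by auto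
  then show ?thesis by (simp add: colw_Suc)
qed

lemma word_filter: "filter (\<lambda>y. y < Suc j) (word fill i (Suc j)) = word fill i j"
  by (induction i) (simp_all add: word_Suc colw_filter)

lemma cell_sh:
  "sh (PT (word fill (Suc i) (Suc j))) (Suc s) =
    max (sh (PT (word fill i (Suc j))) (Suc s)) (sh (PT (word fill (Suc i) j)) (Suc s))
    + (if s = 0 then fill (Suc i, Suc j) else min (sh (PT (word fill i (Suc j))) s) (sh (PT (word fill (Suc i) j)) s)
          - sh (PT (word fill i j)) s)"
proof -
  have W: "\<forall>x\<in>set (word fill i (Suc j)). x \<le> Suc j" using word_set by blast
  have c: "sorted (colw fill (Suc i) j)" "\<forall>x\<in>set (colw fill (Suc i) j). x \<le> j"
    using colw_sorted colw_set by blast+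
  have e1: "word fill (Suc i) (Suc j) = word fill i (Suc j) @ colw fill (Suc i) j @ replicate (fill (Suc i, Suc j)) (Suc j)"
    by (simp add: word_Suc colw_Suc)
  have e2: "filter (\<lambda>y. y < Suc j) (word fill i (Suc j)) @ colw fill (Suc i) j = word fill (Suc i) j"
    by (simp add: word_filter word_Suc)
  have e3: "filter (\<lambda>y. y < Suc j) (word fill i (Suc j)) = word fill i j" by (rule word_filter)
  show ?thesis
    using cell_shape[OF W c, of "fill (Suc i, Suc j)" s] unfolding e1[symmetric] e3 word_Suc[symmetric]
    by (cases s) (simp_all add: sh_def)
qed

lemma subseq_sorted: "subseq s xs \<Longrightarrow> sorted xs \<Longrightarrow> sorted s"
proof (induction rule: list_emb.induct)
  case (list_emb_Nil ys) then show ?case by simp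
next
  case (list_emb_Cons xs ys y) then show ?case by simp
next
  case (list_emb_Cons2 x y xs ys)
  have "set xs \<subseteq> set ys" using list_emb_Cons2(2) by (auto elim: list_emb_set)
  then show ?case using list_emb_Cons2 by auto
qed

lemma dec_sorted_len: "subseq s xs \<Longrightarrow> sorted xs \<Longrightarrow> sorted_wrt (>) s \<Longrightarrow> length s \<le> 1"
proof -
  assume a: "subseq s xs" "sorted xs" "sorted_wrt (>) s"
  have "sorted s" by (rule subseq_sorted[OF a(1,2)])
  show "length s \<le> 1"
  proof (cases s)
    case Nil then show ?thesis by simp
  next
    case (Cons u t)
    then show ?thesis
    proof (cases t)
      case Nil then show ?thesis using Cons by simp
    next
      case (Cons v t')
      then show ?thesis using \<open>s = u # t\<close> \<open>sorted s\<close> a(3) by auto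
    qed
  qed
qed

lemma word_chain: "subseq s (word fill i j) \<Longrightarrow> sorted_wrt (>) s \<Longrightarrow>
  \<exists>cs. map snd cs = s \<and> set cs \<subseteq> rect (i, j) \<and> (\<forall>c\<in>set cs. fill c \<noteq> 0) \<and> sorted_wrt (\<lambda>c d. fst c < fst d) cs"
proof (induction i arbitrary: s)
  case 0
  then have "s = []" using list_emb_Nil2 by fastforce
  then show ?case by (intro exI[of _ "[]"]) simp
next
  case (Suc i)
  from Suc.prems(1) obtain s1 s2 where s: "s = s1 @ s2" "subseq s1 (word fill i j)" "subseq s2 (colw fill (Suc i) j)"
    unfolding word_Suc by (auto elim: subseq_appendE)
  have so: "sorted_wrt (>) s1" "sorted_wrt (>) s2" "\<forall>x\<in>set s1. \<forall>y\<in>set s2. x > y"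
    using Suc.prems(2) unfolding s(1) sorted_wrt_append by blast+
  obtain cs1 where cs1: "map snd cs1 = s1" "set cs1 \<subseteq> rect (i, j)" "\<forall>c\<in>set cs1. fill c \<noteq> 0"
    "sorted_wrt (\<lambda>c d. fst c < fst d) cs1"
    using Suc.IH[OF s(2) so(1)] by blast
  have r: "rect (i, j) \<subseteq> rect (Suc i, j)" by (auto simp: rect_def)
  have "length s2 \<le> 1" by (rule dec_sorted_len[OF s(3) colw_sorted so(2)])
  then consider "s2 = []" | y where "s2 = [y]" by (cases s2) auto
  then show ?case
  proof cases
    case 1 then show ?thesis using cs1 r s(1) by (intro exI[of _ cs1]) auto
  next
    case 2
    have y: "1 \<le> y" "y \<le> j" "fill (Suc i, y) \<noteq> 0"
      using s(3) 2 colw_set[of y fill "Suc i" j] by (auto simp: subseq_singleton_left)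
    have "(Suc i, y) \<in> rect (Suc i, j)" using y by (auto simp: rect_def)
    moreover have "\<forall>c\<in>set cs1. fst c < Suc i" using cs1(2) by (auto simp: rect_def)
    ultimately show ?thesis using cs1 r s(1) 2 y
      by (intro exI[of _ "cs1 @ [(Suc i, y)]"]) (auto simp: sorted_wrt_append)
  qed
qed

lemma dsub_chain: "dsub k (word fill i j) \<Longrightarrow> \<exists>cs. se_chain fill (rect (i, j)) cs \<and> length cs = k"
proof -
  assume "dsub k (word fill i j)"
  then obtain s where s: "subseq s (word fill i j)" "sorted_wrt (>) s" "length s = k" unfolding dsub_def by blast
  obtain cs where cs: "map snd cs = s" "set cs \<subseteq> rect (i, j)" "\<forall>c\<in>set cs. fill c \<noteq> 0"
    "sorted_wrt (\<lambda>c d. fst c < fst d) cs"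
    using word_chain[OF s(1,2)] by blast
  have "sorted_wrt (>) (map snd cs)" using s(2) cs(1) by simp
  then have sn: "sorted_wrt (\<lambda>c d. snd d < snd c) cs" by (simp add: sorted_wrt_map)
  have "se_chain fill (rect (i, j)) cs"
    unfolding se_chain_def using cs(2,3) cs(4) sn by (auto simp: sorted_wrt_iff_nth_less)
  moreover have "length cs = k" using cs(1) s(3) by (metis length_map)
  ultimately show ?thesis by blast
qed



lemma rsk_from_d:
  assumes r: "d_rsk_local_rule d \<kappa> \<mu> \<nu> \<rho> m" and z: "\<kappa> d = 0" "\<mu> d = 0" "\<nu> d = 0" and d1: "1 \<le> d"
  shows "rsk_local_rule \<kappa> \<mu> \<nu> \<rho> m"
proof -
  have dp: "is_d_partition d \<kappa>" "is_d_partition d \<mu>" "is_d_partition d \<nu>" "is_d_partition d \<rho>"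
    using r unfolding d_rsk_local_rule_def by auto
  have big: "\<And>i. i > d \<Longrightarrow> \<kappa> i = 0 \<and> \<mu> i = 0 \<and> \<nu> i = 0 \<and> \<rho> i = 0"
    using dp unfolding is_d_partition_def by auto
  have eq1: "\<rho> 1 + \<kappa> d = m + min (\<mu> d) (\<nu> d) + max (\<mu> 1) (\<nu> 1)"
    using r unfolding d_rsk_local_rule_def by auto
  have eqi: "\<And>i. 2 \<le> i \<Longrightarrow> i \<le> d \<Longrightarrow> \<rho> i + \<kappa> (i - 1) = min (\<mu> (i - 1)) (\<nu> (i - 1)) + max (\<mu> i) (\<nu> i)"
    using r unfolding d_rsk_local_rule_def by auto
  have rest: "\<forall>i\<ge>2. \<rho> i + \<kappa> (i - 1) = min (\<mu> (i - 1)) (\<nu> (i - 1)) + max (\<mu> i) (\<nu> i)"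
  proof (intro allI impI)
    fix i :: nat assume i2: "2 \<le> i"
    consider "i \<le> d" | "i = Suc d" | "i > Suc d" by linarith
    then show "\<rho> i + \<kappa> (i - 1) = min (\<mu> (i - 1)) (\<nu> (i - 1)) + max (\<mu> i) (\<nu> i)"
    proof cases
      case 1 then show ?thesis using eqi i2 by blast
    next
      case 2 then show ?thesis using big[of i] z by simp
    next
      case 3 then show ?thesis using big[of i] big[of "i - 1"] by simp
    qed
  qed
  show ?thesis unfolding rsk_local_rule_def
    using dp r eq1 z rest unfolding is_d_partition_def d_rsk_local_rule_def by auto
qed

lemma step_eq:
  assumes r: "d_rsk_local_rule d K M N \<rho> m"
    and z: "K d = 0" "M d = 0" "N d = 0"
    and R0: "R 0 = 0"
    and Rs: "\<And>s. R (Suc s) = max (M (Suc s)) (N (Suc s)) + (if s = 0 then m else min (M s) (N s) - K s)"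
    and d1: "1 \<le> d"
    and Rbig: "\<And>s. s > d \<Longrightarrow> R s = 0"
  shows "\<rho> = R"
proof
  fix s
  have dp: "is_d_partition d \<rho>" using r unfolding d_rsk_local_rule_def by auto
  have il: "interlaces K M" "interlaces K N" using r unfolding d_rsk_local_rule_def by auto
  consider "s = 0" | "s = 1" | "2 \<le> s" "s \<le> d" | "s > d" by linarith
  then show "\<rho> s = R s"
  proof cases
    case 1 then show ?thesis using dp R0 unfolding is_d_partition_def is_partition_def by simp
  next
    case 2
    have "\<rho> 1 + K d = m + min (M d) (N d) + max (M 1) (N 1)" using r unfolding d_rsk_local_rule_def by auto
    then show ?thesis using 2 z Rs[of 0] by simp
  next
    case 3
    have e: "\<rho> s + K (s - 1) = min (M (s - 1)) (N (s - 1)) + max (M s) (N s)"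
      using r 3 unfolding d_rsk_local_rule_def by auto
    have "K (s - 1) \<le> M (s - 1)" "K (s - 1) \<le> N (s - 1)" using il 3 unfolding interlaces_def by auto
    moreover obtain s' where s': "s = Suc s'" "s' \<noteq> 0" using 3 by (cases s) auto
    ultimately show ?thesis using e Rs[of s'] by simp
  next
    case 4 then show ?thesis using dp Rbig unfolding is_d_partition_def by simp
  qed
qed

lemma se_chain_mono: "se_chain fill S cs \<Longrightarrow> S \<subseteq> S' \<Longrightarrow> se_chain fill S' cs"
  unfolding se_chain_def by blast

lemma sh_zero: "length T < d \<Longrightarrow> d \<le> s \<Longrightarrow> sh T s = 0"
  unfolding sh_def rowf_def by auto

theorem lemma5p2:
  fixes d :: nat and F :: "(nat \<times> nat) set" and fill :: "nat \<times> nat \<Rightarrow> nat"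
    and lam :: "nat \<times> nat \<Rightarrow> partition" and p :: "nat \<times> nat"
  assumes "d_rsk_growth_diagram d F fill lam"
    and "p \<in> lattice_points F"
    and "\<not> (\<exists>cs. se_chain fill (rect p) cs \<and> length cs = d)"
  shows "\<forall>c\<in>rect p. cell_satisfies_rsk fill lam c"
proof -
  obtain P Q where p: "p = (P, Q)" by (cases p)
  show ?thesis
  proof (cases "P = 0 \<or> Q = 0")
    case True
    then have "rect p = {}" unfolding p rect_def by auto
    then show ?thesis by simp
  next
    case False
    have yd: "young_diagram F" and lp: "\<forall>q\<in>lattice_points F. is_partition (lam q)"
      and ax: "\<forall>q\<in>lattice_points F. fst q = 0 \<or> snd q = 0 \<longrightarrow> lam q = empty_partition"
      and cr: "\<forall>c\<in>F. cell_satisfies_d_rsk d fill lam c"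
      using assms(1) unfolding d_rsk_growth_diagram_def by auto
    have d1: "1 \<le> d"
    proof (rule ccontr)
      assume "\<not> 1 \<le> d"
      then have "d = 0" by simp
      moreover have "se_chain fill (rect p) []" unfolding se_chain_def by simp
      ultimately show False using assms(3) by fastforce
    qed
    have cells: "\<And>i j. 1 \<le> i \<Longrightarrow> i \<le> P \<Longrightarrow> 1 \<le> j \<Longrightarrow> j \<le> Q \<Longrightarrow> (i, j) \<in> F"
    proof -
      fix i j :: nat assume ij: "1 \<le> i" "i \<le> P" "1 \<le> j" "j \<le> Q"
      have "(P, Q) \<in> lattice_points F" using assms(2) p by simp
      moreover have "(P, Q) \<noteq> (0, 0)" using False by simp
      ultimately obtain i0 j0 where c0: "(i0, j0) \<in> F" "P = i0 - 1 \<or> P = i0" "Q = j0 - 1 \<or> Q = j0"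
        unfolding lattice_points_def by auto
      then have "P \<le> i0" "Q \<le> j0" by auto
      then have le: "i \<le> i0" "j \<le> j0" using ij by auto
      have dc: "\<forall>i j i' j'. (i,j) \<in> F \<and> 1 \<le> i' \<and> i' \<le> i \<and> 1 \<le> j' \<and> j' \<le> j \<longrightarrow> (i',j') \<in> F"
        using yd unfolding young_diagram_def by blast
      then have "(i0,j0) \<in> F \<and> 1 \<le> i \<and> i \<le> i0 \<and> 1 \<le> j \<and> j \<le> j0 \<longrightarrow> (i,j) \<in> F" by blast
      then show "(i, j) \<in> F" using c0(1) ij le by blast
    qed
    have lat: "\<And>x y. x \<le> P \<Longrightarrow> y \<le> Q \<Longrightarrow> (x, y) \<in> lattice_points F"
    proof -
      fix x y :: nat assume xy: "x \<le> P" "y \<le> Q"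
      have P1: "1 \<le> P" "1 \<le> Q" using False by auto
      consider "x = 0" "y = 0" | "x = 0" "y \<noteq> 0" | "x \<noteq> 0" "y = 0" | "x \<noteq> 0" "y \<noteq> 0" by blast
      then show "(x, y) \<in> lattice_points F"
      proof cases
        case 1 then show ?thesis unfolding lattice_points_def by simp
      next
        case 2
        have "(1, y) \<in> F" using cells[of 1 y] P1 xy 2 by simp
        then show ?thesis unfolding lattice_points_def using 2 by force
      next
        case 3
        have "(x, 1) \<in> F" using cells[of x 1] P1 xy 3 by simp
        then show ?thesis unfolding lattice_points_def using 3 by force
      next
        case 4
        have "(x, y) \<in> F" using cells[of x y] xy 4 by simp
        then show ?thesis unfolding lattice_points_def by force
      qed
    qed
    have rsub: "\<And>x y. x \<le> P \<Longrightarrow> y \<le> Q \<Longrightarrow> rect (x, y) \<subseteq> rect p"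
      unfolding p rect_def by auto
    have nolong: "\<And>x y. x \<le> P \<Longrightarrow> y \<le> Q \<Longrightarrow> length (PT (word fill x y)) < d"
    proof (rule ccontr)
      fix x y assume xy: "x \<le> P" "y \<le> Q" and "\<not> length (PT (word fill x y)) < d"
      then have "d \<le> length (PT (word fill x y))" by simp
      then have "dsub d (word fill x y)" using PT_dsub dsub_le by blast
      then obtain cs where "se_chain fill (rect (x, y)) cs" "length cs = d" using dsub_chain by blast
      then show False using assms(3) se_chain_mono[OF _ rsub[OF xy]] by blast
    qed
    have main: "\<And>x y. x \<le> P \<Longrightarrow> y \<le> Q \<Longrightarrow> lam (x, y) = sh (PT (word fill x y))"
    proof -
      fix x
      show "\<And>y. x \<le> P \<Longrightarrow> y \<le> Q \<Longrightarrow> lam (x, y) = sh (PT (word fill x y))"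
      proof (induction x)
        case 0
        have "lam (0, y) = empty_partition" using ax lat[of 0 y] 0 by auto
        then show ?case by (simp add: empty_partition_def PT_def sh_def fun_eq_iff)
      next
        case (Suc i)
        note outer = Suc.IH
        show ?case using Suc.prems
        proof (induction y)
          case 0
          have "lam (Suc i, 0) = empty_partition" using ax lat[of "Suc i" 0] 0 by auto
          then show ?case by (simp add: empty_partition_def PT_def sh_def fun_eq_iff)
        next
          case (Suc j)
          have K: "lam (i, j) = sh (PT (word fill i j))" using outer Suc.prems by simp
          have M: "lam (i, Suc j) = sh (PT (word fill i (Suc j)))" using outer Suc.prems by simp
          have N: "lam (Suc i, j) = sh (PT (word fill (Suc i) j))" using Suc.prems Suc.IH by simp
          have "(Suc i, Suc j) \<in> F" using cells Suc.prems by simp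
          then have r: "d_rsk_local_rule d (lam (i, j)) (lam (i, Suc j)) (lam (Suc i, j)) (lam (Suc i, Suc j)) (fill (Suc i, Suc j))"
            using cr unfolding cell_satisfies_d_rsk_def by fastforce
          show ?case
          proof (rule step_eq[OF r[unfolded K M N]])
            show "sh (PT (word fill i j)) d = 0" using nolong[of i j] Suc.prems by (intro sh_zero) auto
            show "sh (PT (word fill i (Suc j))) d = 0" using nolong[of i "Suc j"] Suc.prems by (intro sh_zero) auto
            show "sh (PT (word fill (Suc i) j)) d = 0" using nolong[of "Suc i" j] Suc.prems by (intro sh_zero) auto
            show "sh (PT (word fill (Suc i) (Suc j))) 0 = 0" by (simp add: sh_def)
            show "\<And>s. sh (PT (word fill (Suc i) (Suc j))) (Suc s) =
              max (sh (PT (word fill i (Suc j))) (Suc s)) (sh (PT (word fill (Suc i) j)) (Suc s)) +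
              (if s = 0 then fill (Suc i, Suc j)
               else min (sh (PT (word fill i (Suc j))) s) (sh (PT (word fill (Suc i) j)) s) - sh (PT (word fill i j)) s)"
              by (rule cell_sh)
            show "1 \<le> d" by (rule d1)
            show "\<And>s. d < s \<Longrightarrow> sh (PT (word fill (Suc i) (Suc j))) s = 0"
              using nolong[of "Suc i" "Suc j"] Suc.prems by (intro sh_zero) auto
          qed
        qed
      qed
    qed
    show ?thesis
    proof
      fix c assume c: "c \<in> rect p"
      then obtain i j where ij: "c = (i, j)" "1 \<le> i" "i \<le> P" "1 \<le> j" "j \<le> Q"
        unfolding p rect_def by auto
      have "cell_satisfies_d_rsk d fill lam (i, j)" using cr cells ij by blast
      then have r: "d_rsk_local_rule d (lam (i - 1, j - 1)) (lam (i - 1, j)) (lam (i, j - 1)) (lam (i, j)) (fill (i, j))"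
        unfolding cell_satisfies_d_rsk_def by simp
      have a: "i - 1 \<le> P" "j - 1 \<le> Q" using ij by auto
      have z1: "lam (i - 1, j - 1) d = 0"
        unfolding main[OF a(1) a(2)] by (rule sh_zero[OF nolong[OF a(1) a(2)] order_refl])
      have z2: "lam (i - 1, j) d = 0"
        unfolding main[OF a(1) ij(5)] by (rule sh_zero[OF nolong[OF a(1) ij(5)] order_refl])
      have z3: "lam (i, j - 1) d = 0"
        unfolding main[OF ij(3) a(2)] by (rule sh_zero[OF nolong[OF ij(3) a(2)] order_refl])
      note z = z1 z2 z3
      have "rsk_local_rule (lam (i - 1, j - 1)) (lam (i - 1, j)) (lam (i, j - 1)) (lam (i, j)) (fill (i, j))"
        by (rule rsk_from_d[OF r z d1])
      then show "cell_satisfies_rsk fill lam c" unfolding ij(1) cell_satisfies_rsk_def by simp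
    qed
  qed
qed

end
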